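(* Let $\mathbb F_\infty$ have free basis $x_1,x_2,\dots$. Every $S$-invariant subgroup of $\mathbb F_\infty$ that contains the commutator $x_1x_2x_1^{-1}x_2^{-1}$ is fully characteristic, i.e. invariant under every endomorphism of $\mathbb F_\infty$.
   Context: $S\subseteq\mathrm{End}(\mathbb F_\infty)$ is the subsemigroup generated by: (i) for every $n$ and indices $i(1),\dots,i(n)$, the endomorphism $x_k\mapsto x_{i(k)}$ ($k\le n$), $x_k\mapsto x_k$ ($k>n$); (ii) for every $i$, the endomorphism $x_k\mapsto x_i^{-1}x_k$ for all $k$; (iii) for every $k$, the endomorphism $x_k\mapsto e$ fixing all other $x_j$; (iv) the endomorphism $x_k\mapsto x_k^{-1}$ for all $k$; (v) all inner automorphisms. A subgroup $H$ is $S$-invariant if $\phi(H)\subseteq H$ for all $\phi\in S$. *)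

theory Defs
  imports "HOL-Algebra.Group"
begin

text \<open>Free group on countably many generators x_0, x_1, x_2, ... (0-based indexing).
  A letter (True, i) stands for x_i, a letter (False, i) for x_i inverse.
  Elements are freely reduced words.\<close>

type_synonym fword = "(bool \<times> nat) list"

definition inv_letter :: "bool \<times> nat \<Rightarrow> bool \<times> nat" where
  "inv_letter a = (\<not> fst a, snd a)"

fun reduced :: "fword \<Rightarrow> bool" where
  "reduced [] = True"
| "reduced [a] = True"
| "reduced (a # b # w) = (b \<noteq> inv_letter a \<and> reduced (b # w))"

fun red_cons :: "bool \<times> nat \<Rightarrow> fword \<Rightarrow> fword" where
  "red_cons a [] = [a]"
| "red_cons a (b # w) = (if b = inv_letter a then w else a # b # w)"

definition reduce :: "fword \<Rightarrow> fword" where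
  "reduce w = foldr red_cons w []"

definition inv_word :: "fword \<Rightarrow> fword" where
  "inv_word w = rev (map inv_letter w)"

definition F_inf :: "fword monoid" where
  "F_inf = \<lparr>carrier = {w. reduced w}, mult = (\<lambda>u v. reduce (u @ v)), one = []\<rparr>"

definition gen :: "nat \<Rightarrow> fword" where
  "gen i = [(True, i)]"

definition subst :: "(nat \<Rightarrow> fword) \<Rightarrow> fword \<Rightarrow> fword" where
  "subst f w = reduce (concat (map (\<lambda>a. if fst a then f (snd a) else inv_word (f (snd a))) w))"

text \<open>Generators of the semigroup S (with 0-based indices).\<close>
inductive_set S_gens :: "(fword \<Rightarrow> fword) set" where
  rename: "subst (\<lambda>k. if k < n then gen (idx k) else gen k) \<in> S_gens"
| left_mult: "subst (\<lambda>k. reduce [inv_letter (True, i), (True, k)]) \<in> S_gens"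
| kill: "subst (\<lambda>j. if j = k then [] else gen j) \<in> S_gens"
| invert: "subst (\<lambda>k. inv_word (gen k)) \<in> S_gens"
| inner: "g \<in> carrier F_inf \<Longrightarrow>
           (\<lambda>w. g \<otimes>\<^bsub>F_inf\<^esub> w \<otimes>\<^bsub>F_inf\<^esub> inv\<^bsub>F_inf\<^esub> g) \<in> S_gens"

inductive_set S_semigroup :: "(fword \<Rightarrow> fword) set" where
  base: "\<phi> \<in> S_gens \<Longrightarrow> \<phi> \<in> S_semigroup"
| comp: "\<phi> \<in> S_semigroup \<Longrightarrow> \<psi> \<in> S_semigroup \<Longrightarrow> \<phi> \<circ> \<psi> \<in> S_semigroup"

definition S_invariant :: "fword set \<Rightarrow> bool" where
  "S_invariant H \<longleftrightarrow> (\<forall>\<phi> \<in> S_semigroup. \<phi> ` H \<subseteq> H)"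

definition fully_characteristic :: "fword set \<Rightarrow> bool" where
  "fully_characteristic H \<longleftrightarrow> (\<forall>\<phi> \<in> hom F_inf F_inf. \<phi> ` H \<subseteq> H)"

end

theory Submission
  imports Defs "HOL-Algebra.Coset"
begin


lemma inv_inv_letter[simp]: "inv_letter (inv_letter a) = a"
  by (simp add: inv_letter_def)

lemma reduced_tl: "reduced (a # w) \<Longrightarrow> reduced w"
  by (cases w) auto

lemma reduced_red_cons: "reduced r \<Longrightarrow> reduced (red_cons a r)"
  by (cases r) (auto dest: reduced_tl)

lemma reduced_foldr: "reduced z \<Longrightarrow> reduced (foldr red_cons u z)"
  by (induction u) (auto simp: reduced_red_cons)

lemma reduced_reduce[simp]: "reduced (reduce w)"
  unfolding reduce_def by (rule reduced_foldr) simp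

lemma reduce_reduced: "reduced w \<Longrightarrow> reduce w = w"
  by (induction w rule: reduced.induct) (auto simp: reduce_def)

lemma reduce_Nil[simp]: "reduce [] = []" by (simp add: reduce_def)

lemma reduce_Cons: "reduce (a # w) = red_cons a (reduce w)"
  by (simp add: reduce_def)

lemma cancel: "reduced y \<Longrightarrow> red_cons a (red_cons (inv_letter a) y) = y"
proof (cases y)
  case Nil then show ?thesis by simp
next
  case (Cons c y')
  assume r: "reduced y"
  show ?thesis
  proof (cases "c = a")
    case True
    then show ?thesis using Cons r by (cases y') auto
  next
    case False
    then show ?thesis using Cons by auto
  qed
qed

lemma foldr_red_cons: "reduced r \<Longrightarrow> reduced z \<Longrightarrow>
   foldr red_cons (red_cons a r) z = red_cons a (foldr red_cons r z)"
proof (cases r)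
  case (Cons b r')
  assume rr: "reduced r" and z: "reduced z"
  show ?thesis
  proof (cases "b = inv_letter a")
    case True
    have "reduced (foldr red_cons r' z)" using z by (rule reduced_foldr)
    then show ?thesis using Cons True cancel by simp
  qed (use Cons in simp)
qed simp

lemma foldr_reduce: "reduced z \<Longrightarrow> foldr red_cons (reduce u) z = foldr red_cons u z"
proof (induction u)
  case (Cons a u)
  have "foldr red_cons (reduce (a # u)) z = red_cons a (foldr red_cons (reduce u) z)"
    unfolding reduce_Cons by (rule foldr_red_cons) (use Cons in simp_all)
  then show ?case using Cons by simp
qed (simp add: reduce_def)

lemma reduce_append: "reduce (u @ v) = foldr red_cons u (reduce v)"
  by (simp add: reduce_def)

lemma reduce_left[simp]: "reduce (reduce u @ v) = reduce (u @ v)"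
  by (simp add: reduce_append foldr_reduce)

lemma reduce_right[simp]: "reduce (u @ reduce v) = reduce (u @ v)"
  by (simp add: reduce_append reduce_reduced)

lemma reduce_reduce[simp]: "reduce (reduce u) = reduce u"
  by (simp add: reduce_reduced)

lemma reduce_cancel_mid: "reduce (u @ inv_letter a # a # v) = reduce (u @ v)"
  using cancel[of "reduce v" "inv_letter a"] by (simp add: reduce_append reduce_Cons)

lemma reduce_inv_word_left: "reduce (inv_word w @ w @ v) = reduce v"
proof (induction w arbitrary: v)
  case (Cons a w)
  have "inv_word (a # w) @ (a # w) @ v = inv_word w @ inv_letter a # a # (w @ v)"
    by (simp add: inv_word_def)
  then show ?case using Cons reduce_cancel_mid[of "inv_word w" a "w @ v"] by simp
qed (simp add: inv_word_def)

lemma reduce_inv_word_right: "reduce (w @ inv_word w @ v) = reduce v"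
proof (induction w arbitrary: v)
  case (Cons a w)
  have "(a # w) @ inv_word (a # w) @ v = a # (w @ inv_word w @ (inv_letter a # v))"
    by (simp add: inv_word_def)
  then have "reduce ((a # w) @ inv_word (a # w) @ v) = red_cons a (reduce (inv_letter a # v))"
    using Cons by (simp add: reduce_Cons)
  also have "\<dots> = reduce v"
    using cancel[of "reduce v" a] by (simp add: reduce_Cons)
  finally show ?case .
qed (simp add: inv_word_def)

lemma inv_word_inv_word[simp]: "inv_word (inv_word w) = w"
  by (simp add: inv_word_def rev_map comp_def)

lemma F_carrier: "carrier F_inf = {w. reduced w}" by (simp add: F_inf_def)
lemma F_mult: "u \<otimes>\<^bsub>F_inf\<^esub> v = reduce (u @ v)" by (simp add: F_inf_def)
lemma F_one: "\<one>\<^bsub>F_inf\<^esub> = []" by (simp add: F_inf_def)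

lemma group_F: "group F_inf"
proof (rule groupI)
  fix x assume "x \<in> carrier F_inf"
  then show "\<exists>y\<in>carrier F_inf. y \<otimes>\<^bsub>F_inf\<^esub> x = \<one>\<^bsub>F_inf\<^esub>"
    using reduce_inv_word_left[of x "[]"]
    by (intro bexI[of _ "reduce (inv_word x)"]) (auto simp: F_carrier F_mult F_one)
qed (auto simp: F_carrier F_mult F_one reduce_reduced)



interpretation F: group F_inf by (rule group_F)

lemma F_inv: "w \<in> carrier F_inf \<Longrightarrow> inv\<^bsub>F_inf\<^esub> w = reduce (inv_word w)"
  by (rule F.inv_equality) (auto simp: F_carrier F_mult F_one reduce_inv_word_left[of w "[]", simplified])

lemma gen_carrier[simp]: "gen i \<in> carrier F_inf"
  by (simp add: F_carrier gen_def)

lemma inv_gen: "inv\<^bsub>F_inf\<^esub> gen i = [(False, i)]"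
  using F_inv[OF gen_carrier[of i]] by (simp add: gen_def inv_word_def inv_letter_def reduce_def)

lemma F_induct:
  assumes "w \<in> carrier F_inf" "P []"
    "\<And>i u. u \<in> carrier F_inf \<Longrightarrow> P u \<Longrightarrow> P (gen i \<otimes>\<^bsub>F_inf\<^esub> u)"
    "\<And>i u. u \<in> carrier F_inf \<Longrightarrow> P u \<Longrightarrow> P (inv\<^bsub>F_inf\<^esub> (gen i) \<otimes>\<^bsub>F_inf\<^esub> u)"
  shows "P w"
  using assms(1)
proof (induction w)
  case Nil then show ?case using assms(2) by simp
next
  case (Cons a w)
  then have r: "reduced (a # w)" and w: "w \<in> carrier F_inf"
    by (auto simp: F_carrier dest: reduced_tl)
  then have Pw: "P w" using Cons by simp
  obtain b i where a: "a = (b, i)" by force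
  show ?case
  proof (cases b)
    case True
    have "gen i \<otimes>\<^bsub>F_inf\<^esub> w = a # w"
      using r a True by (simp add: F_mult gen_def reduce_reduced)
    then show ?thesis using assms(3)[where i=i, OF w Pw] by simp
  next
    case False
    have "inv\<^bsub>F_inf\<^esub> (gen i) \<otimes>\<^bsub>F_inf\<^esub> w = a # w"
      using r a False by (simp add: F_mult inv_gen reduce_reduced)
    then show ?thesis using assms(4)[where i=i, OF w Pw] by simp
  qed
qed

lemma hom_eq_gen:
  assumes G: "group G" and h1: "\<psi>1 \<in> hom F_inf G" and h2: "\<psi>2 \<in> hom F_inf G"
    and eq: "\<And>i. \<psi>1 (gen i) = \<psi>2 (gen i)" and w: "w \<in> carrier F_inf"
  shows "\<psi>1 w = \<psi>2 w"
  using w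
proof (rule F_induct)
  show "\<psi>1 [] = \<psi>2 []"
    using hom_one[OF h1 group_F G] hom_one[OF h2 group_F G] by (simp add: F_one)
next
  fix i u assume u: "u \<in> carrier F_inf" and IH: "\<psi>1 u = \<psi>2 u"
  show "\<psi>1 (gen i \<otimes>\<^bsub>F_inf\<^esub> u) = \<psi>2 (gen i \<otimes>\<^bsub>F_inf\<^esub> u)"
    using hom_mult[OF h1, of "gen i" u] hom_mult[OF h2, of "gen i" u] u IH eq by simp
  have "\<psi>1 (inv\<^bsub>F_inf\<^esub> gen i) = \<psi>2 (inv\<^bsub>F_inf\<^esub> gen i)"
    using group_hom.hom_inv[of F_inf G \<psi>1 "gen i"] group_hom.hom_inv[of F_inf G \<psi>2 "gen i"]
      eq G h1 h2 group_F by (simp add: group_hom_def group_hom_axioms_def)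
  then show "\<psi>1 (inv\<^bsub>F_inf\<^esub> gen i \<otimes>\<^bsub>F_inf\<^esub> u) = \<psi>2 (inv\<^bsub>F_inf\<^esub> gen i \<otimes>\<^bsub>F_inf\<^esub> u)"
    using hom_mult[OF h1, of "inv\<^bsub>F_inf\<^esub> gen i" u] hom_mult[OF h2, of "inv\<^bsub>F_inf\<^esub> gen i" u] u IH
    by simp
qed

lemma gen_subgroup:
  assumes K: "subgroup K F_inf" and g: "\<And>i. gen i \<in> K" and w: "w \<in> carrier F_inf"
  shows "w \<in> K"
  using w
proof (rule F_induct)
  show "[] \<in> K" using subgroup.one_closed[OF K] by (simp add: F_one)
qed (use K g in \<open>auto intro: subgroup.m_closed subgroup.m_inv_closed\<close>)

definition Exw :: "(nat \<Rightarrow> fword) \<Rightarrow> fword \<Rightarrow> fword" where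
  "Exw f w = concat (map (\<lambda>a. if fst a then f (snd a) else inv_word (f (snd a))) w)"

lemma subst_Ex: "subst f w = reduce (Exw f w)" by (simp add: subst_def Exw_def)

lemma Exw_append[simp]: "Exw f (u @ v) = Exw f u @ Exw f v" by (simp add: Exw_def)

lemma Exw_Cons: "Exw f (a # w) = (if fst a then f (snd a) else inv_word (f (snd a))) @ Exw f w"
  by (simp add: Exw_def)

lemma Exw_red_cons: "reduce (Exw f (red_cons a r)) = reduce (Exw f (a # r))"
proof (cases r)
  case (Cons b r')
  show ?thesis
  proof (cases "b = inv_letter a")
    case True
    have "Exw f (a # r) = (if fst a then f (snd a) else inv_word (f (snd a))) @
       inv_word (if fst a then f (snd a) else inv_word (f (snd a))) @ Exw f r'"
      using Cons True by (simp add: Exw_Cons inv_letter_def)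
    then show ?thesis using Cons True reduce_inv_word_right by simp
  qed (use Cons in simp)
qed simp

lemma subst_reduce[simp]: "subst f (reduce w) = subst f w"
proof (induction w)
  case (Cons a w)
  have "subst f (reduce (a # w)) = reduce (Exw f (a # reduce w))"
    by (simp add: subst_Ex reduce_Cons Exw_red_cons)
  also have "\<dots> = reduce ((if fst a then f (snd a) else inv_word (f (snd a))) @ reduce (Exw f (reduce w)))"
    by (simp add: Exw_Cons)
  also have "\<dots> = subst f (a # w)"
    using Cons by (simp add: subst_Ex Exw_Cons)
  finally show ?case .
qed simp

lemma subst_hom: "subst f \<in> hom F_inf F_inf"
proof (rule homI)
  fix x y
  have "subst f (reduce (x @ y)) = subst f (x @ y)" by (rule subst_reduce)
  then show "subst f (x \<otimes>\<^bsub>F_inf\<^esub> y) = subst f x \<otimes>\<^bsub>F_inf\<^esub> subst f y"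
    by (simp add: F_mult subst_Ex)
qed (auto simp: F_carrier subst_Ex)

lemma subst_gen: "subst f (gen i) = reduce (f i)"
  by (simp add: subst_Ex gen_def Exw_def)

lemma subst_cong: "(\<And>a. a \<in> set w \<Longrightarrow> f (snd a) = g (snd a)) \<Longrightarrow> subst f w = subst g w"
  unfolding subst_def by (rule arg_cong[where f = reduce], rule arg_cong[where f = concat]) auto

lemma set_red_cons: "set (red_cons a r) \<subseteq> insert a (set r)"
  by (cases r) auto

lemma set_reduce: "set (reduce w) \<subseteq> set w"
  by (induction w) (use set_red_cons in \<open>fastforce simp: reduce_Cons\<close>)+



lemma (in group) comm_from_commutator:
  assumes "a \<in> carrier G" "b \<in> carrier G" "a \<otimes> b \<otimes> inv a \<otimes> inv b = \<one>"
  shows "a \<otimes> b = b \<otimes> a"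
proof -
  have x: "a \<otimes> b \<otimes> inv a \<in> carrier G" using assms by simp
  have "a \<otimes> b \<otimes> inv a = (a \<otimes> b \<otimes> inv a \<otimes> inv b) \<otimes> b"
    using assms(1,2) by (simp add: m_assoc)
  also have "\<dots> = \<one> \<otimes> b" by (simp only: assms(3))
  also have "\<dots> = b" using assms(2) by simp
  finally have e: "a \<otimes> b \<otimes> inv a = b" .
  have "a \<otimes> b = a \<otimes> b \<otimes> inv a \<otimes> a" using assms(1,2) by (simp add: m_assoc)
  then show ?thesis using e by simp
qed

lemma hom_prod_comm:
  assumes Q: "comm_group Q" and h1: "f \<in> hom F_inf Q" and h2: "g \<in> hom F_inf Q"
  shows "(\<lambda>w. f w \<otimes>\<^bsub>Q\<^esub> g w) \<in> hom F_inf Q"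
proof -
  interpret Q: comm_group Q by (rule Q)
  show ?thesis
proof (rule homI)
  fix x y assume x: "x \<in> carrier F_inf" and y: "y \<in> carrier F_inf"
  have c: "f x \<in> carrier Q" "f y \<in> carrier Q" "g x \<in> carrier Q" "g y \<in> carrier Q"
    using x y h1 h2 by (auto simp: hom_def Pi_def)
  show "f (x \<otimes>\<^bsub>F_inf\<^esub> y) \<otimes>\<^bsub>Q\<^esub> g (x \<otimes>\<^bsub>F_inf\<^esub> y) =
       (f x \<otimes>\<^bsub>Q\<^esub> g x) \<otimes>\<^bsub>Q\<^esub> (f y \<otimes>\<^bsub>Q\<^esub> g y)"
    using hom_mult[OF h1 x y] hom_mult[OF h2 x y] c by (simp add: Q.m_ac)
qed (use h1 h2 in \<open>auto simp: hom_def Pi_def\<close>)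
qed

lemma hom_pow_comm:
  assumes Q: "comm_group Q" and h1: "f \<in> hom F_inf Q"
  shows "(\<lambda>w. f w [^]\<^bsub>Q\<^esub> (e::int)) \<in> hom F_inf Q"
proof -
  interpret Q: comm_group Q by (rule Q)
  show ?thesis
proof (rule homI)
  fix x y assume x: "x \<in> carrier F_inf" and y: "y \<in> carrier F_inf"
  have c: "f x \<in> carrier Q" "f y \<in> carrier Q"
    using x y h1 by (auto simp: hom_def Pi_def)
  show "f (x \<otimes>\<^bsub>F_inf\<^esub> y) [^]\<^bsub>Q\<^esub> e = f x [^]\<^bsub>Q\<^esub> e \<otimes>\<^bsub>Q\<^esub> f y [^]\<^bsub>Q\<^esub> e"
    using hom_mult[OF h1 x y] c by (simp add: Q.int_pow_distrib)
qed (use h1 in \<open>auto simp: hom_def Pi_def\<close>)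
qed

lemma const_hom: "group Q \<Longrightarrow> (\<lambda>w. \<one>\<^bsub>Q\<^esub>) \<in> hom F_inf Q"
  by (rule homI) (auto simp: group.is_monoid)

lemma id_hom_F: "(\<lambda>w. w) \<in> hom F_inf F_inf"
  by (rule homI) auto

definition killS :: "nat set \<Rightarrow> fword \<Rightarrow> fword" where
  "killS J = subst (\<lambda>j. if j \<in> J then [] else gen j)"

definition piK :: "nat \<Rightarrow> fword \<Rightarrow> fword" where
  "piK k = subst (\<lambda>j. if j = k then gen k else [])"

lemma reduce_gen[simp]: "reduce (gen i) = gen i"
  by (simp add: gen_def reduce_def)

lemma piK_pow:
  assumes w: "w \<in> carrier F_inf" shows "\<exists>e::int. piK k w = gen k [^]\<^bsub>F_inf\<^esub> e"
  using w
proof (rule F_induct)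
  show "\<exists>e::int. piK k [] = gen k [^]\<^bsub>F_inf\<^esub> e"
    by (rule exI[of _ 0]) (simp add: piK_def subst_def F_one)
next
  fix i u assume u: "u \<in> carrier F_inf" and IH: "\<exists>e::int. piK k u = gen k [^]\<^bsub>F_inf\<^esub> e"
  then obtain e where e: "piK k u = gen k [^]\<^bsub>F_inf\<^esub> (e::int)" by blast
  have h: "piK k \<in> hom F_inf F_inf" by (simp add: piK_def subst_hom)
  have g: "piK k (gen i) = (if i = k then gen k else \<one>\<^bsub>F_inf\<^esub>)"
    by (simp add: piK_def subst_gen F_one)
  show "\<exists>e::int. piK k (gen i \<otimes>\<^bsub>F_inf\<^esub> u) = gen k [^]\<^bsub>F_inf\<^esub> e"
  proof (cases "i = k")
    case True
    then show ?thesis using hom_mult[OF h gen_carrier u] g e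
      by (intro exI[of _ "1 + e"]) (simp add: F.int_pow_mult)
  next
    case False
    then show ?thesis using hom_mult[OF h gen_carrier u] g e
      by (intro exI[of _ "e"]) simp
  qed
  have hi: "piK k (inv\<^bsub>F_inf\<^esub> gen i) = inv\<^bsub>F_inf\<^esub> piK k (gen i)"
    using group_hom.hom_inv[of F_inf F_inf "piK k" "gen i"] h group_F
    by (simp add: group_hom_def group_hom_axioms_def)
  show "\<exists>e::int. piK k (inv\<^bsub>F_inf\<^esub> gen i \<otimes>\<^bsub>F_inf\<^esub> u) = gen k [^]\<^bsub>F_inf\<^esub> e"
  proof (cases "i = k")
    case True
    then show ?thesis using hom_mult[OF h _ u, of "inv\<^bsub>F_inf\<^esub> gen i"] g e hi
    proof (intro exI[of _ "-1 + e"])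
      have "inv\<^bsub>F_inf\<^esub> gen k = gen k [^]\<^bsub>F_inf\<^esub> (-1::int)"
        using F.int_pow_neg[of "gen k" 1] by simp
      have A: "piK k (inv\<^bsub>F_inf\<^esub> gen i \<otimes>\<^bsub>F_inf\<^esub> u) = inv\<^bsub>F_inf\<^esub> gen k \<otimes>\<^bsub>F_inf\<^esub> gen k [^]\<^bsub>F_inf\<^esub> e"
        using hom_mult[OF h _ u, of "inv\<^bsub>F_inf\<^esub> gen i"] g e hi True by simp
      show "piK k (inv\<^bsub>F_inf\<^esub> gen i \<otimes>\<^bsub>F_inf\<^esub> u) = gen k [^]\<^bsub>F_inf\<^esub> (-1 + e)"
        unfolding A \<open>inv\<^bsub>F_inf\<^esub> gen k = _\<close> by (rule F.int_pow_mult[symmetric]) simp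
    qed
  next
    case False
    then show ?thesis using hom_mult[OF h _ u, of "inv\<^bsub>F_inf\<^esub> gen i"] g e hi
      by (intro exI[of _ "e"]) simp
  qed
qed



lemma (in group) comm_inv:
  assumes "a \<in> carrier G" "z \<in> carrier G" "a \<otimes> z = z \<otimes> a"
  shows "inv a \<otimes> z = z \<otimes> inv a"
proof -
  have "inv a \<otimes> z = inv a \<otimes> (z \<otimes> a) \<otimes> inv a" using assms(1,2) by (simp add: m_assoc)
  also have "\<dots> = inv a \<otimes> (a \<otimes> z) \<otimes> inv a" using assms(3) by simp
  also have "\<dots> = z \<otimes> inv a" using assms(1,2) by (simp add: m_assoc[symmetric])
  finally show ?thesis .
qed

lemma (in group) comm_mult:
  assumes "a \<in> carrier G" "b \<in> carrier G" "z \<in> carrier G"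
    "a \<otimes> z = z \<otimes> a" "b \<otimes> z = z \<otimes> b"
  shows "a \<otimes> b \<otimes> z = z \<otimes> (a \<otimes> b)"
proof -
  have "a \<otimes> b \<otimes> z = a \<otimes> (b \<otimes> z)" using assms(1-3) by (simp add: m_assoc)
  also have "\<dots> = (a \<otimes> z) \<otimes> b" using assms(1-3,5) by (simp add: m_assoc)
  also have "\<dots> = z \<otimes> (a \<otimes> b)" using assms(1-3,4) by (simp add: m_assoc)
  finally show ?thesis .
qed

locale Hsetup =
  fixes H
  assumes sub: "subgroup H F_inf" and inv: "S_invariant H"
    and com: "[(True, 0), (True, 1), (False, 0), (False, 1)] \<in> H"
begin

lemma Hc: "H \<subseteq> carrier F_inf" using sub subgroup.subset by blast

lemma S_gen_H: "\<phi> \<in> S_gens \<Longrightarrow> h \<in> H \<Longrightarrow> \<phi> h \<in> H"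
  using inv S_semigroup.base unfolding S_invariant_def by blast

lemma normal_H: "normal H F_inf"
  unfolding F.normal_inv_iff
  using sub S_gen_H[OF S_gens.inner] by blast

lemma kill_H: "h \<in> H \<Longrightarrow> subst (\<lambda>j. if j = k then [] else gen j) h \<in> H"
  by (rule S_gen_H[OF S_gens.kill])

lemma rename_H: "h \<in> H \<Longrightarrow> subst (\<lambda>k. if k < n then gen (idx k) else gen k) h \<in> H"
  by (rule S_gen_H[OF S_gens.rename])

lemma commutator_H:
  "gen i \<otimes>\<^bsub>F_inf\<^esub> gen j \<otimes>\<^bsub>F_inf\<^esub> inv\<^bsub>F_inf\<^esub> gen i \<otimes>\<^bsub>F_inf\<^esub> inv\<^bsub>F_inf\<^esub> gen j \<in> H"
proof -
  have "subst (\<lambda>k. if k < 2 then gen ((\<lambda>k. if k = 0 then i else j) k) else gen k)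
     [(True, 0), (True, 1), (False, 0), (False, 1)] \<in> H"
    by (rule rename_H[OF com])
  moreover have "subst (\<lambda>k. if k < 2 then gen ((\<lambda>k. if k = 0 then i else j) k) else gen k)
     [(True, 0), (True, 1), (False, 0), (False, 1)] = reduce [(True, i), (True, j), (False, i), (False, j)]"
    by (simp add: subst_def gen_def inv_word_def inv_letter_def)
  moreover have "gen i \<otimes>\<^bsub>F_inf\<^esub> gen j \<otimes>\<^bsub>F_inf\<^esub> inv\<^bsub>F_inf\<^esub> gen i \<otimes>\<^bsub>F_inf\<^esub> inv\<^bsub>F_inf\<^esub> gen j
      = reduce [(True, i), (True, j), (False, i), (False, j)]"
    using reduce_left[of "[(True, i), (True, j)]" "[(False, i)]"]
      reduce_left[of "[(True, i), (True, j), (False, i)]" "[(False, j)]"]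
    unfolding F_mult inv_gen by (simp add: gen_def)
  ultimately show ?thesis by simp
qed

abbreviation Q where "Q \<equiv> F_inf Mod H"
abbreviation q where "q \<equiv> (\<lambda>a. r_coset F_inf H a)"

lemma Q_group: "group Q" using normal_H by (rule normal.factorgroup_is_group)
lemma q_hom: "q \<in> hom F_inf Q" using normal.r_coset_hom_Mod[OF normal_H] by simp

lemma q_one_iff: "w \<in> carrier F_inf \<Longrightarrow> q w = \<one>\<^bsub>Q\<^esub> \<longleftrightarrow> w \<in> H"
  using F.coset_join1[of H w] F.coset_join2[of w H] sub by auto

lemma q_carrier: "w \<in> carrier F_inf \<Longrightarrow> q w \<in> carrier Q"
  using q_hom by (auto simp: hom_def Pi_def)

lemma q_inv: "w \<in> carrier F_inf \<Longrightarrow> q (inv\<^bsub>F_inf\<^esub> w) = inv\<^bsub>Q\<^esub> q w"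
  using group_hom.hom_inv[of F_inf Q q w] q_hom group_F Q_group
  by (simp add: group_hom_def group_hom_axioms_def)

lemma centralizer_sub:
  assumes z: "z \<in> carrier Q"
  shows "subgroup {w \<in> carrier F_inf. q w \<otimes>\<^bsub>Q\<^esub> z = z \<otimes>\<^bsub>Q\<^esub> q w} F_inf"
proof -
  interpret Q: group Q by (rule Q_group)
  show ?thesis
  proof (rule F.subgroupI)
    show "{w \<in> carrier F_inf. q w \<otimes>\<^bsub>Q\<^esub> z = z \<otimes>\<^bsub>Q\<^esub> q w} \<noteq> {}"
    proof -
      have o: "q \<one>\<^bsub>F_inf\<^esub> = \<one>\<^bsub>Q\<^esub>" by (rule hom_one[OF q_hom group_F Q_group])
      have "q \<one>\<^bsub>F_inf\<^esub> \<otimes>\<^bsub>Q\<^esub> z = z \<otimes>\<^bsub>Q\<^esub> q \<one>\<^bsub>F_inf\<^esub>"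
        unfolding o using Q.l_one[OF z] Q.r_one[OF z] by (rule trans[OF _ sym])
      then have "\<one>\<^bsub>F_inf\<^esub> \<in> {w \<in> carrier F_inf. q w \<otimes>\<^bsub>Q\<^esub> z = z \<otimes>\<^bsub>Q\<^esub> q w}"
        using F.one_closed by blast
      then show ?thesis by blast
    qed
  next
    fix a assume a: "a \<in> {w \<in> carrier F_inf. q w \<otimes>\<^bsub>Q\<^esub> z = z \<otimes>\<^bsub>Q\<^esub> q w}"
    then have ac: "a \<in> carrier F_inf" and e: "q a \<otimes>\<^bsub>Q\<^esub> z = z \<otimes>\<^bsub>Q\<^esub> q a" by auto
    have qa: "q a \<in> carrier Q" using q_carrier ac .
    have "inv\<^bsub>Q\<^esub> q a \<otimes>\<^bsub>Q\<^esub> z = z \<otimes>\<^bsub>Q\<^esub> inv\<^bsub>Q\<^esub> q a"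
      by (rule Q.comm_inv[OF qa z e])
    then show "inv\<^bsub>F_inf\<^esub> a \<in> {w \<in> carrier F_inf. q w \<otimes>\<^bsub>Q\<^esub> z = z \<otimes>\<^bsub>Q\<^esub> q w}"
      using ac q_inv by simp
  next
    fix a b assume a: "a \<in> {w \<in> carrier F_inf. q w \<otimes>\<^bsub>Q\<^esub> z = z \<otimes>\<^bsub>Q\<^esub> q w}"
      and b: "b \<in> {w \<in> carrier F_inf. q w \<otimes>\<^bsub>Q\<^esub> z = z \<otimes>\<^bsub>Q\<^esub> q w}"
    then have ac: "a \<in> carrier F_inf" and ea: "q a \<otimes>\<^bsub>Q\<^esub> z = z \<otimes>\<^bsub>Q\<^esub> q a"
      and bc: "b \<in> carrier F_inf" and eb: "q b \<otimes>\<^bsub>Q\<^esub> z = z \<otimes>\<^bsub>Q\<^esub> q b" by auto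
    have qa: "q a \<in> carrier Q" "q b \<in> carrier Q" using q_carrier ac bc by auto
    have "q (a \<otimes>\<^bsub>F_inf\<^esub> b) \<otimes>\<^bsub>Q\<^esub> z = z \<otimes>\<^bsub>Q\<^esub> q (a \<otimes>\<^bsub>F_inf\<^esub> b)"
      unfolding hom_mult[OF q_hom ac bc] by (rule Q.comm_mult[OF qa z ea eb])
    then show "a \<otimes>\<^bsub>F_inf\<^esub> b \<in> {w \<in> carrier F_inf. q w \<otimes>\<^bsub>Q\<^esub> z = z \<otimes>\<^bsub>Q\<^esub> q w}"
      using ac bc by simp
  qed blast
qed

lemma gens_commute: "q (gen i) \<otimes>\<^bsub>Q\<^esub> q (gen j) = q (gen j) \<otimes>\<^bsub>Q\<^esub> q (gen i)"
proof -
  interpret Q: group Q by (rule Q_group)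
  have c: "q (gen i \<otimes>\<^bsub>F_inf\<^esub> gen j \<otimes>\<^bsub>F_inf\<^esub> inv\<^bsub>F_inf\<^esub> gen i \<otimes>\<^bsub>F_inf\<^esub> inv\<^bsub>F_inf\<^esub> gen j) = \<one>\<^bsub>Q\<^esub>"
    using commutator_H[of i j] Hc by (intro q_one_iff[THEN iffD2]) auto
  then have "q (gen i) \<otimes>\<^bsub>Q\<^esub> q (gen j) \<otimes>\<^bsub>Q\<^esub> inv\<^bsub>Q\<^esub> q (gen i) \<otimes>\<^bsub>Q\<^esub> inv\<^bsub>Q\<^esub> q (gen j) = \<one>\<^bsub>Q\<^esub>"
    by (simp add: hom_mult[OF q_hom] q_inv)
  then show ?thesis
    by (rule Q.comm_from_commutator[rotated 2]) (simp_all add: q_carrier)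
qed

lemma Q_comm: "comm_group Q"
proof -
  interpret Q: group Q by (rule Q_group)
  have step1: "\<And>w j. w \<in> carrier F_inf \<Longrightarrow> q w \<otimes>\<^bsub>Q\<^esub> q (gen j) = q (gen j) \<otimes>\<^bsub>Q\<^esub> q w"
  proof -
    fix w j assume w: "w \<in> carrier F_inf"
    have "w \<in> {w \<in> carrier F_inf. q w \<otimes>\<^bsub>Q\<^esub> q (gen j) = q (gen j) \<otimes>\<^bsub>Q\<^esub> q w}"
    proof (rule gen_subgroup[OF centralizer_sub])
      show "q (gen j) \<in> carrier Q" by (simp add: q_carrier)
      fix i show "gen i \<in> {w \<in> carrier F_inf. q w \<otimes>\<^bsub>Q\<^esub> q (gen j) = q (gen j) \<otimes>\<^bsub>Q\<^esub> q w}"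
        using gens_commute[of i j] gen_carrier[of i] by (intro CollectI conjI)
    qed (rule w)
    then show "q w \<otimes>\<^bsub>Q\<^esub> q (gen j) = q (gen j) \<otimes>\<^bsub>Q\<^esub> q w" by simp
  qed
  have step2: "\<And>w v. w \<in> carrier F_inf \<Longrightarrow> v \<in> carrier F_inf \<Longrightarrow> q v \<otimes>\<^bsub>Q\<^esub> q w = q w \<otimes>\<^bsub>Q\<^esub> q v"
  proof -
    fix w v assume w: "w \<in> carrier F_inf" and v: "v \<in> carrier F_inf"
    have "v \<in> {u \<in> carrier F_inf. q u \<otimes>\<^bsub>Q\<^esub> q w = q w \<otimes>\<^bsub>Q\<^esub> q u}"
    proof (rule gen_subgroup[OF centralizer_sub])
      show "q w \<in> carrier Q" by (simp add: q_carrier w)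
      fix i show "gen i \<in> {u \<in> carrier F_inf. q u \<otimes>\<^bsub>Q\<^esub> q w = q w \<otimes>\<^bsub>Q\<^esub> q u}"
        using step1[OF w, of i] gen_carrier[of i] by (intro CollectI conjI) (assumption, rule sym)
    qed (rule v)
    then show "q v \<otimes>\<^bsub>Q\<^esub> q w = q w \<otimes>\<^bsub>Q\<^esub> q v" by simp
  qed
  show ?thesis
  proof (rule Q.group_comm_groupI)
    fix x y assume "x \<in> carrier Q" "y \<in> carrier Q"
    then obtain a b where "a \<in> carrier F_inf" "b \<in> carrier F_inf" "x = q a" "y = q b"
      unfolding carrier_FactGroup by blast
    then show "x \<otimes>\<^bsub>Q\<^esub> y = y \<otimes>\<^bsub>Q\<^esub> x" using step2 by simp
  qed
qed

end


declare mult_FactGroup[simp del] one_FactGroup[simp del]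

lemma subst_Nil[simp]: "subst f [] = []" by (simp add: subst_def)

lemma idx_kill: "snd ` set (subst (\<lambda>j. if j = k then [] else gen j) w) \<subseteq> snd ` set w - {k}"
proof -
  have "set (subst (\<lambda>j. if j = k then [] else gen j) w) \<subseteq>
      set (Exw (\<lambda>j. if j = k then [] else gen j) w)"
    unfolding subst_Ex by (rule set_reduce)
  moreover have "snd ` set (Exw (\<lambda>j. if j = k then [] else gen j) w) \<subseteq> snd ` set w - {k}"
    by (auto simp: Exw_def gen_def inv_word_def inv_letter_def split: if_splits)
  ultimately show ?thesis by blast
qed

context Hsetup
begin

lemma killS_H: "finite J \<Longrightarrow> h \<in> H \<Longrightarrow> killS J h \<in> H"
proof (induction J arbitrary: h rule: finite_induct)
  case empty
  have hc: "h \<in> carrier F_inf" using Hc empty.prems by blast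
  have "killS {} h = (\<lambda>w. w) h"
    unfolding killS_def
    by (rule hom_eq_gen[OF group_F subst_hom id_hom_F _ hc]) (simp add: subst_gen)
  then show ?case using empty by simp
next
  case (insert j J)
  have hc: "h \<in> carrier F_inf" using Hc insert.prems by blast
  have "killS (insert j J) h = (subst (\<lambda>i. if i = j then [] else gen i) \<circ> killS J) h"
    unfolding killS_def
    by (rule hom_eq_gen[OF group_F subst_hom hom_compose[OF subst_hom subst_hom] _ hc])
       (simp add: subst_gen)
  then show ?case using insert kill_H by simp
qed

lemma chi_hom: "\<phi> \<in> hom F_inf F_inf \<Longrightarrow> (\<lambda>w. q (\<phi> w)) \<in> hom F_inf Q"
  using hom_compose[of \<phi> F_inf F_inf q Q] q_hom by (simp add: comp_def)

lemma phi_carrier: "\<phi> \<in> hom F_inf F_inf \<Longrightarrow> w \<in> carrier F_inf \<Longrightarrow> \<phi> w \<in> carrier F_inf"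
  by (auto simp: hom_def Pi_def)

lemma pow_gen_H:
  assumes e: "gen k [^]\<^bsub>F_inf\<^esub> (e::int) \<in> H"
  shows "gen l [^]\<^bsub>F_inf\<^esub> e \<in> H"
proof -
  let ?r = "subst (\<lambda>j. if j < Suc k then gen ((\<lambda>j. if j = k then l else j) j) else gen j)"
  have "?r (gen k [^]\<^bsub>F_inf\<^esub> e) \<in> H" by (rule rename_H[OF e])
  moreover have "?r (gen k [^]\<^bsub>F_inf\<^esub> e) = ?r (gen k) [^]\<^bsub>F_inf\<^esub> e"
    by (rule hom_int_pow[OF subst_hom gen_carrier group_F group_F])
  ultimately show ?thesis by (simp add: subst_gen)
qed

lemma powA:
  assumes \<phi>: "\<phi> \<in> hom F_inf F_inf" and e: "gen k [^]\<^bsub>F_inf\<^esub> (e::int) \<in> H"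
  shows "q (\<phi> (gen k [^]\<^bsub>F_inf\<^esub> e)) = \<one>\<^bsub>Q\<^esub>"
proof -
  interpret Q: comm_group Q by (rule Q_comm)
  have tau: "(\<lambda>w. q w [^]\<^bsub>Q\<^esub> e) \<in> hom F_inf Q" by (rule hom_pow_comm[OF Q_comm q_hom])
  have tg: "q (gen l) [^]\<^bsub>Q\<^esub> e = \<one>\<^bsub>Q\<^esub>" for l
  proof -
    have "q (gen l) [^]\<^bsub>Q\<^esub> e = q (gen l [^]\<^bsub>F_inf\<^esub> e)"
      by (rule hom_int_pow[OF q_hom gen_carrier group_F Q_group, symmetric])
    also have "\<dots> = \<one>\<^bsub>Q\<^esub>" using pow_gen_H[OF e, of l] by (simp add: q_one_iff)
    finally show ?thesis .
  qed
  have pc: "\<phi> (gen k) \<in> carrier F_inf" using phi_carrier[OF \<phi> gen_carrier] .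
  have "q (\<phi> (gen k)) [^]\<^bsub>Q\<^esub> e = \<one>\<^bsub>Q\<^esub>"
    using hom_eq_gen[OF Q_group tau const_hom[OF Q_group] tg pc] .
  moreover have "q (\<phi> (gen k [^]\<^bsub>F_inf\<^esub> e)) = q (\<phi> (gen k)) [^]\<^bsub>Q\<^esub> e"
    using hom_int_pow[OF \<phi> gen_carrier group_F group_F, of k e]
      hom_int_pow[OF q_hom pc group_F Q_group, of e] by simp
  ultimately show ?thesis by simp
qed

lemma decomp:
  assumes \<phi>: "\<phi> \<in> hom F_inf F_inf" and w: "w \<in> carrier F_inf"
  shows "q (\<phi> w) = q (\<phi> (subst (\<lambda>j. if j = k then [] else gen j) w)) \<otimes>\<^bsub>Q\<^esub> q (\<phi> (piK k w))"
proof -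
  interpret Q: comm_group Q by (rule Q_comm)
  let ?k = "subst (\<lambda>j. if j = k then [] else gen j)"
  have h1: "(\<lambda>w. q (\<phi> (?k w))) \<in> hom F_inf Q"
    using hom_compose[OF subst_hom chi_hom[OF \<phi>]] by (simp add: comp_def)
  have h2: "(\<lambda>w. q (\<phi> (piK k w))) \<in> hom F_inf Q"
    using hom_compose[OF subst_hom chi_hom[OF \<phi>]] by (simp add: comp_def piK_def)
  have one: "q (\<phi> []) = \<one>\<^bsub>Q\<^esub>"
    using hom_one[OF \<phi> group_F group_F] hom_one[OF q_hom group_F Q_group] by (simp add: F_one)
  have qc: "q (\<phi> (gen i)) \<in> carrier Q" for i
    using q_carrier phi_carrier[OF \<phi> gen_carrier] .
  show ?thesis
  proof (rule hom_eq_gen[OF Q_group chi_hom[OF \<phi>] hom_prod_comm[OF Q_comm h1 h2] _ w])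
    fix i
    show "q (\<phi> (gen i)) = q (\<phi> (?k (gen i))) \<otimes>\<^bsub>Q\<^esub> q (\<phi> (piK k (gen i)))"
    proof (cases "i = k")
      case True
      then have "q (\<phi> (?k (gen i))) = \<one>\<^bsub>Q\<^esub>" "piK k (gen i) = gen i"
        using one by (simp_all add: subst_gen piK_def)
      then show ?thesis using Q.l_one[OF qc[of i]] by simp
    next
      case False
      then have "q (\<phi> (piK k (gen i))) = \<one>\<^bsub>Q\<^esub>" "?k (gen i) = gen i"
        using one by (simp_all add: subst_gen piK_def)
      then show ?thesis using Q.r_one[OF qc[of i]] by simp
    qed
  qed
qed

lemma main_ind:
  assumes \<phi>: "\<phi> \<in> hom F_inf F_inf" and I: "finite I"
  shows "\<forall>h\<in>H. snd ` set h \<subseteq> I \<longrightarrow> q (\<phi> h) = \<one>\<^bsub>Q\<^esub>"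
  using I
proof (induction I rule: finite_induct)
  case empty
  have "q (\<phi> []) = \<one>\<^bsub>Q\<^esub>"
    using hom_one[OF \<phi> group_F group_F] hom_one[OF q_hom group_F Q_group] by (simp add: F_one)
  then show ?case by auto
next
  case (insert k I)
  interpret Q: comm_group Q by (rule Q_comm)
  show ?case
  proof (intro ballI impI)
    fix h assume h: "h \<in> H" and hi: "snd ` set h \<subseteq> insert k I"
    have hc: "h \<in> carrier F_inf" using h Hc by blast
    let ?k = "subst (\<lambda>j. if j = k then [] else gen j)"
    have k1: "?k h \<in> H" by (rule kill_H[OF h])
    have "snd ` set (?k h) \<subseteq> I" using idx_kill[of k h] hi by blast
    then have A: "q (\<phi> (?k h)) = \<one>\<^bsub>Q\<^esub>" using insert.IH k1 by blast
    have "piK k h = killS I h"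
      unfolding piK_def killS_def
    proof (rule subst_cong)
      fix a assume "a \<in> set h"
      then have "snd a \<in> insert k I" using hi by blast
      then show "(if snd a = k then gen k else []) = (if snd a \<in> I then [] else gen (snd a))"
        using insert.hyps(2) by auto
    qed
    then have pH: "piK k h \<in> H" using killS_H[OF insert.hyps(1) h] by simp
    obtain e where e: "piK k h = gen k [^]\<^bsub>F_inf\<^esub> (e::int)" using piK_pow[OF hc] by blast
    have B: "q (\<phi> (piK k h)) = \<one>\<^bsub>Q\<^esub>" using powA[OF \<phi>, of k e] pH e by simp
    show "q (\<phi> h) = \<one>\<^bsub>Q\<^esub>"
      using decomp[OF \<phi> hc, of k] A B Q.l_one[OF Q.one_closed] by simp
  qed
qed

lemma fully: "fully_characteristic H"
  unfolding fully_characteristic_def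
proof (intro ballI subsetI)
  fix \<phi> x assume \<phi>: "\<phi> \<in> hom F_inf F_inf" and x: "x \<in> \<phi> ` H"
  then obtain h where h: "h \<in> H" and xh: "x = \<phi> h" by blast
  have "q (\<phi> h) = \<one>\<^bsub>Q\<^esub>" using main_ind[OF \<phi>, of "snd ` set h"] h by simp
  then show "x \<in> H" using q_one_iff phi_carrier[OF \<phi>] h Hc xh by blast
qed

end

theorem mainTheorem11:
  assumes "subgroup H F_inf"
    and "S_invariant H"
    and "[(True, 0), (True, 1), (False, 0), (False, 1)] \<in> H"
  shows "fully_characteristic H"
proof -
  interpret Hsetup H using assms by (simp add: Hsetup_def)
  show ?thesis by (rule fully)
qed

end
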